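(* Against an oblivious adversary, if one of the two robots has zero wait time and zero computation delay in every cycle (while the other robot's wait times and computation delays are arbitrary nonnegative values chosen by the adversary), and the algorithm knows the speed ratio $\alpha$ of the robots, then it is possible to gather the two robots: there is a randomized algorithm such that the robots gather with positive probability.
   Context: Two robots are anonymous, oblivious (no memory of past cycles), silent (no communication) points in the Euclidean plane with no common coordinate system, each having access to random bits and moving at its own constant speed; $\alpha$ is the ratio of their speeds. Each robot repeatedly executes a cycle: it waits (wait time $\mathcal{W}$), looks (obtains a snapshot of the other robot's current position, which may be in motion), has a computation delay $\mathcal{C}$, then moves to a destination computed from the snapshot and its random bits, reaching it in the same cycle (rigid movement). A robot that looks and finds the other robot at its own position decides it has gathered and stops; gathering means both robots are at the same point. The scheduler is an adversary choosing wait times and computation delays; an oblivious adversary knows the algorithm but not the outcomes of random bits, so it fixes all these sequences before the execution. *)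

theory Defs
  imports "HOL-Probability.Probability"
begin

text \<open>The plane is modelled as the complex numbers.  Robots are indexed by bool;
  robot False is the robot with zero wait time and zero computation delay.\<close>

text \<open>A local coordinate system of a robot in a cycle: centred at the robot's current
  position, with an arbitrary similarity (rotation+scaling by a nonzero complex factor,
  optionally a reflection).\<close>
type_synonym frame = "complex \<times> bool"

definition to_global :: "complex \<Rightarrow> frame \<Rightarrow> complex \<Rightarrow> complex" where
  "to_global p F z = p + fst F * (if snd F then cnj z else z)"

definition to_local :: "complex \<Rightarrow> frame \<Rightarrow> complex \<Rightarrow> complex" where
  "to_local p F w = (let z = (w - p) / fst F in if snd F then cnj z else z)"

text \<open>An algorithm: given the known speed ratio alpha, the snapshot of the other robot
  (in local coordinates) and the random bits of the current cycle, it returns the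
  destination (in local coordinates).  Obliviousness: nothing else is input.\<close>
type_synonym algorithm = "real \<Rightarrow> complex \<Rightarrow> (nat \<Rightarrow> bool) \<Rightarrow> complex"

text \<open>Speed ratio (fast over slow); robots are anonymous.\<close>
definition speed_ratio :: "(bool \<Rightarrow> real) \<Rightarrow> real" where
  "speed_ratio s = max (s False) (s True) / min (s False) (s True)"

text \<open>A complete execution in which robot i performs exactly n i cycles, the last of which
  is the one in which it looks, sees the other robot at its own position, and stops.
  pos i t is the position of robot i at time t, T i k the start time of its k-th cycle.
  Given all parameters, this execution is unique if it exists.\<close>
definition execution ::
  "algorithm \<Rightarrow> real \<Rightarrow> (bool \<Rightarrow> real) \<Rightarrow> (bool \<Rightarrow> complex) \<Rightarrow> (bool \<Rightarrow> nat \<Rightarrow> frame)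
   \<Rightarrow> (bool \<Rightarrow> nat \<Rightarrow> real) \<Rightarrow> (bool \<Rightarrow> nat \<Rightarrow> real) \<Rightarrow> (bool \<Rightarrow> nat \<Rightarrow> nat \<Rightarrow> bool)
   \<Rightarrow> (bool \<Rightarrow> real \<Rightarrow> complex) \<Rightarrow> (bool \<Rightarrow> nat \<Rightarrow> real) \<Rightarrow> (bool \<Rightarrow> nat) \<Rightarrow> bool" where
  "execution alg \<alpha> s x0 F W C \<omega> pos T n \<longleftrightarrow>
    (\<forall>i. pos i 0 = x0 i \<and> T i 0 = 0 \<and> 0 < n i \<and>
      (\<forall>k < n i.
        (let p = pos i (T i k);
             tl = T i k + W i k;
             tm = tl + C i k;
             q = pos (\<not> i) tl;
             d = to_global p (F i k) (alg \<alpha> (to_local p (F i k) q) (\<omega> i k))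
         in if Suc k = n i then q = p \<and> (\<forall>t\<ge>T i k. pos i t = p)
            else q \<noteq> p \<and> T i (Suc k) = tm + cmod (d - p) / s i \<and>
                 (\<forall>t. T i k \<le> t \<and> t \<le> tm \<longrightarrow> pos i t = p) \<and>
                 (\<forall>t. tm \<le> t \<and> t \<le> T i (Suc k) \<longrightarrow>
                    pos i t = p + of_real ((t - tm) * s i / cmod (d - p)) * (d - p)))))"

definition gathered :: "(bool \<Rightarrow> real \<Rightarrow> complex) \<Rightarrow> bool" where
  "gathered pos \<longleftrightarrow> (\<exists>t p. \<forall>t'\<ge>t. pos False t' = p \<and> pos True t' = p)"

definition gathers ::
  "algorithm \<Rightarrow> real \<Rightarrow> (bool \<Rightarrow> real) \<Rightarrow> (bool \<Rightarrow> complex) \<Rightarrow> (bool \<Rightarrow> nat \<Rightarrow> frame)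
   \<Rightarrow> (bool \<Rightarrow> nat \<Rightarrow> real) \<Rightarrow> (bool \<Rightarrow> nat \<Rightarrow> real) \<Rightarrow> (bool \<Rightarrow> nat \<Rightarrow> nat \<Rightarrow> bool) \<Rightarrow> bool" where
  "gathers alg \<alpha> s x0 F W C \<omega> \<longleftrightarrow>
     (\<exists>pos T n. execution alg \<alpha> s x0 F W C \<omega> pos T n \<and> gathered pos)"

text \<open>Random bits: omega (i,k,j) is the j-th fair random bit of robot i in cycle k.\<close>
definition coin_space :: "(bool \<times> nat \<times> nat \<Rightarrow> bool) measure" where
  "coin_space = PiM UNIV (\<lambda>_. measure_pmf (bernoulli_pmf (1/2)))"

end

theory Submission
  imports Defs
begin


lemma inv2pow: "0 < (inverse 2 :: ennreal) ^ n"
proof -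
  have "(inverse 2 :: ennreal) = ennreal (inverse 2)"
    using inverse_ennreal[of 2] by simp
  then have "(inverse 2 :: ennreal) ^ n = ennreal (inverse 2 ^ n)"
    by (metis ennreal_power inverse_nonnegative_iff_nonnegative zero_le_numeral)
  then show ?thesis by simp
qed

lemma cyl_pos:
  fixes S :: "(bool \<times> nat \<times> nat) set" and b :: "bool \<times> nat \<times> nat \<Rightarrow> bool"
  assumes "finite S"
  shows "{\<omega>. \<forall>x\<in>S. \<omega> x = b x} \<in> sets coin_space \<and> 0 < emeasure coin_space {\<omega>. \<forall>x\<in>S. \<omega> x = b x}"
proof -
  let ?M = "\<lambda>_::bool \<times> nat \<times> nat. measure_pmf (bernoulli_pmf (1/2))"
  have eq: "{\<omega>. \<forall>x\<in>S. \<omega> x = b x} = prod_emb UNIV ?M S (Pi\<^sub>E S (\<lambda>x. {b x}))"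
    by (auto simp: prod_emb_def space_PiM PiE_def extensional_def restrict_def)
  have "prod_emb UNIV ?M S (Pi\<^sub>E S (\<lambda>x. {b x})) \<in> sets (PiM UNIV ?M)"
    using assms by (intro sets_PiM_I) auto
  moreover have "emeasure (PiM UNIV ?M) (prod_emb UNIV ?M S (Pi\<^sub>E S (\<lambda>x. {b x}))) = (\<Prod>i\<in>S. emeasure (?M i) {b i})"
    using assms by (intro emeasure_PiM_emb) (auto simp: prob_space_measure_pmf)
  moreover have "emeasure (?M i) {b i} = ennreal (1/2)" for i
    by (cases "b i") (auto simp: emeasure_pmf_single)
  ultimately show ?thesis unfolding coin_space_def eq
    using inv2pow by simp
qed

definition fc :: "real \<Rightarrow> (nat \<Rightarrow> bool) \<Rightarrow> real" where
  "fc \<alpha> w = (if w 2 then \<alpha> / (1 + \<alpha>) else 1 / (1 + \<alpha>))"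

definition coef :: "real \<Rightarrow> (nat \<Rightarrow> bool) \<Rightarrow> real" where
  "coef \<alpha> w = (if w 0 then (if w 1 then 1 else 0) else if w 1 then fc \<alpha> w
     else 1 - (1 - fc \<alpha> w / 2) ^ (LEAST j. \<not> w (j + 3)))"

definition galg :: algorithm where
  "galg \<alpha> z w = complex_of_real (coef \<alpha> w) * z"

lemma dest_eq:
  assumes "fst Fr \<noteq> 0"
  shows "to_global p Fr (complex_of_real c * to_local p Fr q) = p + complex_of_real c * (q - p)"
  using assms by (cases "snd Fr") (auto simp: to_global_def to_local_def Let_def)

lemma exec_1d:
  fixes r :: "bool \<Rightarrow> real \<Rightarrow> real" and u b :: complex
  assumes u: "u \<noteq> 0"
    and x0: "\<And>i. x0 i = b + of_real (r i 0) * u"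
    and Fnz: "\<And>i k. fst (F i k) \<noteq> 0"
    and H: "\<And>i. T i 0 = 0 \<and> 0 < n i \<and> (\<forall>k<n i. let rp = r i (T i k); tl = T i k + W i k;
       tm = tl + C i k; rq = r (\<not>i) tl; c = coef \<alpha> (\<omega> i k) in
       if Suc k = n i then rq = rp \<and> (\<forall>t\<ge>T i k. r i t = rp)
       else rq \<noteq> rp \<and> T i (Suc k) = tm + \<bar>c\<bar> * \<bar>rq - rp\<bar> * cmod u / s i \<and>
         (\<forall>t. T i k \<le> t \<and> t \<le> tm \<longrightarrow> r i t = rp) \<and>
         (\<forall>t. tm \<le> t \<and> t \<le> T i (Suc k) \<longrightarrow>
            r i t = rp + (t - tm) * s i / (\<bar>c\<bar> * \<bar>rq - rp\<bar> * cmod u) * (c * (rq - rp))))"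
  shows "execution galg \<alpha> s x0 F W C \<omega> (\<lambda>i t. b + of_real (r i t) * u) T n"
  unfolding execution_def
proof (rule allI, intro conjI)
  fix i
  show "b + of_real (r i 0) * u = x0 i" using x0 by simp
  show "T i 0 = 0" "0 < n i" using H[of i] by auto
  show "\<forall>k<n i. let p = b + complex_of_real (r i (T i k)) * u; tl = T i k + W i k; tm = tl + C i k;
              q = b + complex_of_real (r (\<not> i) tl) * u;
              d = to_global p (F i k) (galg \<alpha> (to_local p (F i k) q) (\<omega> i k))
          in if Suc k = n i then q = p \<and> (\<forall>t\<ge>T i k. b + complex_of_real (r i t) * u = p)
             else q \<noteq> p \<and>
                  T i (Suc k) = tm + cmod (d - p) / s i \<and>
                  (\<forall>t. T i k \<le> t \<and> t \<le> tm \<longrightarrow> b + complex_of_real (r i t) * u = p) \<and>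
                  (\<forall>t. tm \<le> t \<and> t \<le> T i (Suc k) \<longrightarrow>
                       b + complex_of_real (r i t) * u = p + complex_of_real ((t - tm) * s i / cmod (d - p)) * (d - p))"
  proof (intro allI impI)
    fix k assume k: "k < n i"
    define rp where "rp = r i (T i k)"
    define tl where "tl = T i k + W i k"
    define tm where "tm = tl + C i k"
    define rq where "rq = r (\<not>i) tl"
    define c where "c = coef \<alpha> (\<omega> i k)"
    have Hk0: "let rp = r i (T i k); tl = T i k + W i k;
       tm = tl + C i k; rq = r (\<not>i) tl; c = coef \<alpha> (\<omega> i k) in
       if Suc k = n i then rq = rp \<and> (\<forall>t\<ge>T i k. r i t = rp)
       else rq \<noteq> rp \<and> T i (Suc k) = tm + \<bar>c\<bar> * \<bar>rq - rp\<bar> * cmod u / s i \<and>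
         (\<forall>t. T i k \<le> t \<and> t \<le> tm \<longrightarrow> r i t = rp) \<and>
         (\<forall>t. tm \<le> t \<and> t \<le> T i (Suc k) \<longrightarrow>
            r i t = rp + (t - tm) * s i / (\<bar>c\<bar> * \<bar>rq - rp\<bar> * cmod u) * (c * (rq - rp)))"
      using H[of i] k by blast
    have Hk: "if Suc k = n i then rq = rp \<and> (\<forall>t\<ge>T i k. r i t = rp)
       else rq \<noteq> rp \<and> T i (Suc k) = tm + \<bar>c\<bar> * \<bar>rq - rp\<bar> * cmod u / s i \<and>
         (\<forall>t. T i k \<le> t \<and> t \<le> tm \<longrightarrow> r i t = rp) \<and>
         (\<forall>t. tm \<le> t \<and> t \<le> T i (Suc k) \<longrightarrow>
            r i t = rp + (t - tm) * s i / (\<bar>c\<bar> * \<bar>rq - rp\<bar> * cmod u) * (c * (rq - rp)))"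
      using Hk0 unfolding Let_def rp_def tl_def tm_def rq_def c_def .
    define d where "d = to_global (b + of_real rp * u) (F i k) (galg \<alpha> (to_local (b + of_real rp * u) (F i k) (b + of_real rq * u)) (\<omega> i k))"
    have d: "d - (b + of_real rp * u) = of_real (c * (rq - rp)) * u"
      unfolding d_def galg_def c_def by (simp add: dest_eq[OF Fnz] algebra_simps)
    have nd: "cmod (d - (b + of_real rp * u)) = \<bar>c\<bar> * \<bar>rq - rp\<bar> * cmod u"
      unfolding d by (simp only: norm_mult norm_of_real abs_mult)
    have inj: "(b + of_real x * u = b + of_real y * u) \<longleftrightarrow> x = y" for x y
      using u by auto
    have mv: "b + of_real (rp + (t - tm) * s i / (\<bar>c\<bar> * \<bar>rq - rp\<bar> * cmod u) * (c * (rq - rp))) * u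
       = (b + of_real rp * u) + of_real ((t - tm) * s i / cmod (d - (b + of_real rp * u))) * (d - (b + of_real rp * u))" for t
    proof -
      have gen: "b + of_real (rp + X * Y) * u = (b + of_real rp * u) + of_real X * (of_real Y * u)" for X Y :: real
        by (simp add: algebra_simps)
      show ?thesis unfolding nd unfolding d by (rule gen)
    qed
    have goal: "if Suc k = n i then b + of_real rq * u = b + of_real rp * u \<and> (\<forall>t\<ge>T i k. b + complex_of_real (r i t) * u = b + of_real rp * u)
             else b + of_real rq * u \<noteq> b + of_real rp * u \<and>
                  T i (Suc k) = tm + cmod (d - (b + of_real rp * u)) / s i \<and>
                  (\<forall>t. T i k \<le> t \<and> t \<le> tm \<longrightarrow> b + complex_of_real (r i t) * u = b + of_real rp * u) \<and>
                  (\<forall>t. tm \<le> t \<and> t \<le> T i (Suc k) \<longrightarrow>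
                       b + complex_of_real (r i t) * u = (b + of_real rp * u) + complex_of_real ((t - tm) * s i / cmod (d - (b + of_real rp * u))) * (d - (b + of_real rp * u)))"
    proof (cases "Suc k = n i")
      case True
      then show ?thesis using Hk by (simp only: if_True inj) simp
    next
      case False
      then have h: "rq \<noteq> rp" "T i (Suc k) = tm + \<bar>c\<bar> * \<bar>rq - rp\<bar> * cmod u / s i"
         "\<And>t. T i k \<le> t \<Longrightarrow> t \<le> tm \<Longrightarrow> r i t = rp"
         "\<And>t. tm \<le> t \<Longrightarrow> t \<le> T i (Suc k) \<Longrightarrow>
            r i t = rp + (t - tm) * s i / (\<bar>c\<bar> * \<bar>rq - rp\<bar> * cmod u) * (c * (rq - rp))"
        using Hk by (simp_all only: if_False) blast+
      show ?thesis unfolding if_not_P[OF False]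
      proof (intro conjI allI impI)
        show "b + of_real rq * u \<noteq> b + of_real rp * u" using h(1) inj by blast
        show "T i (Suc k) = tm + cmod (d - (b + of_real rp * u)) / s i" using h(2) nd by simp
      next
        fix t assume "T i k \<le> t \<and> t \<le> tm"
        then show "b + complex_of_real (r i t) * u = b + of_real rp * u" using h(3) by simp
      next
        fix t assume "tm \<le> t \<and> t \<le> T i (Suc k)"
        then show "b + complex_of_real (r i t) * u = (b + of_real rp * u) + complex_of_real ((t - tm) * s i / cmod (d - (b + of_real rp * u))) * (d - (b + of_real rp * u))"
          using h(4)[of t] mv[of t] by simp
      qed
    qed
    show "let p = b + complex_of_real (r i (T i k)) * u; tl = T i k + W i k; tm = tl + C i k;
              q = b + complex_of_real (r (\<not> i) tl) * u;
              d = to_global p (F i k) (galg \<alpha> (to_local p (F i k) q) (\<omega> i k))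
          in if Suc k = n i then q = p \<and> (\<forall>t\<ge>T i k. b + complex_of_real (r i t) * u = p)
             else q \<noteq> p \<and>
                  T i (Suc k) = tm + cmod (d - p) / s i \<and>
                  (\<forall>t. T i k \<le> t \<and> t \<le> tm \<longrightarrow> b + complex_of_real (r i t) * u = p) \<and>
                  (\<forall>t. tm \<le> t \<and> t \<le> T i (Suc k) \<longrightarrow>
                       b + complex_of_real (r i t) * u = p + complex_of_real ((t - tm) * s i / cmod (d - p)) * (d - p))"
      unfolding Let_def rp_def[symmetric] tl_def[symmetric] tm_def[symmetric] rq_def[symmetric] d_def[symmetric]
      by (rule goal)
  qed
qed



definition cycok :: "(bool \<Rightarrow> real \<Rightarrow> real) \<Rightarrow> (bool \<Rightarrow> nat \<Rightarrow> real) \<Rightarrow> (bool \<Rightarrow> nat)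
   \<Rightarrow> (bool \<Rightarrow> nat \<Rightarrow> real) \<Rightarrow> (bool \<Rightarrow> nat \<Rightarrow> real) \<Rightarrow> (bool \<Rightarrow> real) \<Rightarrow> real
   \<Rightarrow> (bool \<Rightarrow> nat \<Rightarrow> real) \<Rightarrow> bool \<Rightarrow> nat \<Rightarrow> bool" where
  "cycok r T n W C s D cf i k \<longleftrightarrow> (let rp = r i (T i k); tl = T i k + W i k;
       tm = tl + C i k; rq = r (\<not>i) tl; c = cf i k in
       if Suc k = n i then rq = rp \<and> (\<forall>t\<ge>T i k. r i t = rp)
       else rq \<noteq> rp \<and> T i (Suc k) = tm + \<bar>c\<bar> * \<bar>rq - rp\<bar> * D / s i \<and>
         (\<forall>t. T i k \<le> t \<and> t \<le> tm \<longrightarrow> r i t = rp) \<and>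
         (\<forall>t. tm \<le> t \<and> t \<le> T i (Suc k) \<longrightarrow>
            r i t = rp + (t - tm) * s i / (\<bar>c\<bar> * \<bar>rq - rp\<bar> * D) * (c * (rq - rp))))"

lemma exec_1d':
  fixes r :: "bool \<Rightarrow> real \<Rightarrow> real" and u b :: complex
  assumes u: "u \<noteq> 0"
    and x0: "\<And>i. x0 i = b + of_real (r i 0) * u"
    and Fnz: "\<And>i k. fst (F i k) \<noteq> 0"
    and H: "\<And>i. T i 0 = 0 \<and> 0 < n i \<and> (\<forall>k<n i. cycok r T n W C s (cmod u) (\<lambda>i k. coef \<alpha> (\<omega> i k)) i k)"
  shows "execution galg \<alpha> s x0 F W C \<omega> (\<lambda>i t. b + of_real (r i t) * u) T n"
proof (rule exec_1d)
  show "u \<noteq> 0" by (rule u)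
  show "x0 i = b + of_real (r i 0) * u" for i by (rule x0)
  show "fst (F i k) \<noteq> 0" for i k by (rule Fnz)
  show "T i 0 = 0 \<and> 0 < n i \<and> (\<forall>k<n i. let rp = r i (T i k); tl = T i k + W i k;
       tm = tl + C i k; rq = r (\<not>i) tl; c = coef \<alpha> (\<omega> i k) in
       if Suc k = n i then rq = rp \<and> (\<forall>t\<ge>T i k. r i t = rp)
       else rq \<noteq> rp \<and> T i (Suc k) = tm + \<bar>c\<bar> * \<bar>rq - rp\<bar> * cmod u / s i \<and>
         (\<forall>t. T i k \<le> t \<and> t \<le> tm \<longrightarrow> r i t = rp) \<and>
         (\<forall>t. tm \<le> t \<and> t \<le> T i (Suc k) \<longrightarrow>
            r i t = rp + (t - tm) * s i / (\<bar>c\<bar> * \<bar>rq - rp\<bar> * cmod u) * (c * (rq - rp))))" for i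
    using H[of i] unfolding cycok_def .
qed

lemma all_less1: "P 0 \<Longrightarrow> \<forall>k<(1::nat). P k" by auto
lemma all_less2: "P 0 \<Longrightarrow> P 1 \<Longrightarrow> \<forall>k<(2::nat). P k"
  by (metis less_2_cases One_nat_def)
lemma all_less3: "P 0 \<Longrightarrow> P 1 \<Longrightarrow> P 2 \<Longrightarrow> \<forall>k<(3::nat). P k"
  by (auto simp: less_Suc_eq eval_nat_numeral)

lemma case0:
  assumes "x0 True = x0 False"
  shows "gathers galg \<alpha> s x0 F W C \<omega>"
proof -
  have x: "x0 i = x0 False" for i using assms by (cases i) auto
  have "execution galg \<alpha> s x0 F W C \<omega> (\<lambda>i t. x0 False) (\<lambda>i k. 0) (\<lambda>i. 1)"
    unfolding execution_def by (simp add: Let_def) (metis x)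
  moreover have "gathered (\<lambda>i t. x0 False)" unfolding gathered_def by auto
  ultimately show ?thesis unfolding gathers_def by blast
qed

lemma caseX:
  assumes u: "x0 True - x0 False \<noteq> 0"
    and sp: "\<And>i. 0 < s i"
    and Fnz: "\<And>i k. fst (F i k) \<noteq> 0"
    and W0: "\<And>k. W False k = 0 \<and> C False k = 0"
    and W1: "\<And>k. 0 \<le> W True k \<and> 0 \<le> C True k"
    and X: "cmod (x0 True - x0 False) / s False \<le> W True 0 + C True 0"
    and c0: "coef \<alpha> (\<omega> False 0) = 1" and c1: "coef \<alpha> (\<omega> True 0) = 0"
  shows "gathers galg \<alpha> s x0 F W C \<omega>"
proof -
  define u where "u = x0 True - x0 False"
  define D where "D = cmod u"
  have Dp: "0 < D" using u unfolding D_def u_def by simp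
  have sF: "0 < s False" and sT: "0 < s True" using sp by auto
  have DsF: "0 < D / s False" using Dp sF by simp
  define rF where "rF = (\<lambda>t::real. if t \<le> D / s False then t * s False / D else 1)"
  define r where "r = (\<lambda>i::bool. if i then (\<lambda>t::real. 1::real) else rF)"
  define TT where "TT = (\<lambda>i (k::nat). if i then (if k = 0 then 0 else W True 0 + C True 0) else (if k = 0 then 0 else D / s False))"
  define nn where "nn = (\<lambda>i. if i then (if D / s False \<le> W True 0 then 1 else 2) else (2::nat))"
  have rF1: "rF t = 1" if "D / s False \<le> t" for t
    using that Dp sF by (auto simp: rF_def field_simps)
  have ex: "execution galg \<alpha> s x0 F W C \<omega> (\<lambda>i t. x0 False + of_real (r i t) * u) TT nn"
  proof (rule exec_1d'[OF u[folded u_def] _ Fnz])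
    show "x0 i = x0 False + of_real (r i 0) * u" for i
      using DsF by (cases i) (auto simp: r_def rF_def u_def)
    show "TT i 0 = 0 \<and> 0 < nn i \<and> (\<forall>k<nn i. cycok r TT nn W C s (cmod u) (\<lambda>i k. coef \<alpha> (\<omega> i k)) i k)" for i
    proof (cases i)
      case False
      have "\<forall>k<2. cycok r TT nn W C s D (\<lambda>i k. coef \<alpha> (\<omega> i k)) False k"
      proof (rule all_less2)
        show "cycok r TT nn W C s D (\<lambda>i k. coef \<alpha> (\<omega> i k)) False 0"
          unfolding cycok_def Let_def using DsF Dp sF W0 c0
          by (auto simp: r_def rF_def TT_def nn_def)
        show "cycok r TT nn W C s D (\<lambda>i k. coef \<alpha> (\<omega> i k)) False 1"
          unfolding cycok_def Let_def using DsF Dp sF W0 rF1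
          by (auto simp: r_def TT_def nn_def)
      qed
      then show ?thesis using False by (simp add: TT_def nn_def D_def)
    next
      case True
      show ?thesis
      proof (cases "D / s False \<le> W True 0")
        case True
        have "\<forall>k<1. cycok r TT nn W C s D (\<lambda>i k. coef \<alpha> (\<omega> i k)) True k"
        proof (rule all_less1)
          show "cycok r TT nn W C s D (\<lambda>i k. coef \<alpha> (\<omega> i k)) True 0"
            unfolding cycok_def Let_def using True rF1
            by (auto simp: r_def TT_def nn_def)
        qed
        then show ?thesis using \<open>i\<close> True by (simp add: TT_def nn_def D_def)
      next
        case False
        have "\<forall>k<2. cycok r TT nn W C s D (\<lambda>i k. coef \<alpha> (\<omega> i k)) True k"
        proof (rule all_less2)
          show "cycok r TT nn W C s D (\<lambda>i k. coef \<alpha> (\<omega> i k)) True 0"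
            unfolding cycok_def Let_def using False Dp sF W1[of 0] c1
            by (auto simp: r_def rF_def TT_def nn_def field_simps)
          have "D / s False \<le> W True 0 + C True 0 + W True 1"
            using X W1[of 1] unfolding D_def u_def by linarith
          then show "cycok r TT nn W C s D (\<lambda>i k. coef \<alpha> (\<omega> i k)) True 1"
            unfolding cycok_def Let_def using False rF1
            by (auto simp: r_def TT_def nn_def)
        qed
        then show ?thesis using \<open>i\<close> False by (simp add: TT_def nn_def D_def)
      qed
    qed
  qed
  moreover have "gathered (\<lambda>i t. x0 False + of_real (r i t) * u)"
    unfolding gathered_def
    by (rule exI[of _ "D / s False"], rule exI[of _ "x0 False + u"]) (auto simp: r_def rF1)
  ultimately show ?thesis unfolding gathers_def by blast
qed

lemma cycok_move:
  assumes "r i (T i k) = rp" "T i k + W i k = tk" "tk + C i k = tm" "r (\<not>i) tk = rq" "cf i k = c"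
    "Suc k \<noteq> n i" "rq \<noteq> rp" "T i (Suc k) = tm + \<bar>c\<bar> * \<bar>rq - rp\<bar> * D / s i"
    "\<And>t. T i k \<le> t \<Longrightarrow> t \<le> tm \<Longrightarrow> r i t = rp"
    "\<And>t. tm \<le> t \<Longrightarrow> t \<le> T i (Suc k) \<Longrightarrow> r i t = rp + (t - tm) * s i / (\<bar>c\<bar> * \<bar>rq - rp\<bar> * D) * (c * (rq - rp))"
  shows "cycok r T n W C s D cf i k"
  unfolding cycok_def Let_def assms(1-5) using assms(6-10) by simp

lemma cycok_stop:
  assumes "r i (T i k) = rp" "r (\<not>i) (T i k + W i k) = rp" "Suc k = n i" "\<And>t. T i k \<le> t \<Longrightarrow> r i t = rp"
  shows "cycok r T n W C s D cf i k"
  unfolding cycok_def Let_def assms(1,2) using assms(3,4) by simp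

lemma caseY:
  assumes u: "x0 True - x0 False \<noteq> 0"
    and sp: "\<And>i. 0 < s i"
    and Fnz: "\<And>i k. fst (F i k) \<noteq> 0"
    and W0: "\<And>k. W False k = 0 \<and> C False k = 0"
    and W1: "\<And>k. 0 \<le> W True k \<and> 0 \<le> C True k"
    and xa: "s False * (W True 0 + C True 0) / cmod (x0 True - x0 False) < a"
    and ax: "a < s False / (s False + s True) + (1 - s False / (s False + s True)) * (s False * (W True 0 + C True 0) / cmod (x0 True - x0 False))"
    and c0: "coef \<alpha> (\<omega> False 0) = a" and c1: "coef \<alpha> (\<omega> False 1) = s False / (s False + s True)"
    and c2: "coef \<alpha> (\<omega> True 0) = 1" and c3: "coef \<alpha> (\<omega> True 1) = 1"
  shows "gathers galg \<alpha> s x0 F W C \<omega>"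
proof -
  define u where "u = x0 True - x0 False"
  define D where "D = cmod u"
  define sF where "sF = s False"
  define sT where "sT = s True"
  define M0 where "M0 = W True 0 + C True 0"
  define W0 where "W0 = W True 0"
  define x where "x = sF * M0 / D"
  define f where "f = sF / (sF + sT)"
  have Dp: "0 < D" using u unfolding D_def u_def by simp
  have sF: "0 < sF" and sT: "0 < sT" using sp by (auto simp: sF_def sT_def)
  have M0: "0 \<le> W0" "W0 \<le> M0" using W1[of 0] by (auto simp: M0_def W0_def)
  have xa': "x < a" using xa by (simp add: x_def sF_def M0_def D_def u_def)
  have ax': "a < f + (1 - f) * x" using ax by (simp add: x_def sF_def sT_def f_def M0_def D_def u_def)
  have f01: "0 < f" "f < 1" using sF sT by (auto simp: f_def field_simps)
  have fs: "f * sT / sF = 1 - f"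
  proof -
    have e: "(sF * (sF * sT) + sF * (sT * sT)) = sT * (sF * sF + sF * sT)" by algebra
    have "0 < sF * sF + sF * sT" using sF sT by (simp add: add_pos_pos)
    then show ?thesis using sF sT e by (simp add: f_def field_simps)
  qed
  have x0: "0 \<le> x" using M0 sF Dp by (simp add: x_def)
  have fx: "f * x < f" using xa' ax' by (simp add: algebra_simps)
  have x1: "x < 1" using fx f01 by simp
  have a0: "0 < a" using x0 xa' by simp
  have "(1 - f) * x < (1 - f) * 1" using x1 f01 by (intro mult_strict_left_mono) auto
  then have a1: "a < 1" using ax' by simp
  define \<tau>1 where "\<tau>1 = a * D / sF"
  define r0 where "r0 = sF * W0 / D"
  define q1 where "q1 = 1 - (\<tau>1 - M0) * sT / D"
  define g where "g = a + f * (q1 - a)"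
  define \<tau>2 where "\<tau>2 = \<tau>1 + f * (q1 - a) * D / sF"
  define T1 where "T1 = M0 + (1 - r0) * D / sT"
  define M1 where "M1 = T1 + W True 1 + C True 1"
  define T2 where "T2 = M1 + (g - r0) * D / sT"
  have r0x: "0 \<le> r0" "r0 \<le> x" using M0 sF Dp
    by (auto simp: r0_def x_def divide_right_mono mult_left_mono)
  have M0t1: "M0 < \<tau>1" using xa' sF Dp by (simp add: x_def \<tau>1_def field_simps)
  have q1a: "a < q1"
  proof -
    have "q1 = 1 - a * sT / sF + x * sT / sF"
      using Dp sF by (simp add: q1_def \<tau>1_def x_def field_simps)
    moreover have "a * (sF + sT) < sF + x * sT"
    proof -
      have p: "0 < sF + sT" using sF sT by simp
      have "1 - f = sT / (sF + sT)" using p by (simp add: f_def field_simps)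
      then have "f + (1 - f) * x = (sF + x * sT) / (sF + sT)"
        by (simp add: f_def add_divide_distrib mult.commute)
      then show ?thesis using ax' p by (simp add: pos_less_divide_eq)
    qed
    ultimately have "q1 * sF = sF - a * sT + x * sT" and "a * sF + a * sT < sF + x * sT"
      using sF by (simp_all add: field_simps)
    then have "a * sF < q1 * sF" by linarith
    then show ?thesis using sF by simp
  qed
  have t1t2: "\<tau>1 < \<tau>2" using q1a f01 Dp sF by (simp add: \<tau>2_def)
  have ga: "a < g" using q1a f01 by (simp add: g_def)
  have rT2: "1 - (\<tau>2 - M0) * sT / D = g"
  proof -
    have "1 - (\<tau>2 - M0) * sT / D = q1 - (f * sT / sF) * (q1 - a)"
      using Dp sF by (simp add: \<tau>2_def q1_def field_simps)
    then show ?thesis using fs by (simp add: g_def algebra_simps)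
  qed
  have gr0: "r0 < g" using ga xa' r0x by simp
  have t2T1: "\<tau>2 < T1"
  proof -
    have "(\<tau>2 - M0) * sT / D < 1 - r0" using rT2 gr0 by simp
    then have "(\<tau>2 - M0) < (1 - r0) * D / sT" using Dp sT by (simp add: field_simps)
    then show ?thesis by (simp add: T1_def)
  qed
  have rT1: "1 - (T1 - M0) * sT / D = r0" using Dp sT by (simp add: T1_def field_simps)
  have M1: "T1 \<le> T1 + W True 1" "T1 + W True 1 \<le> M1" using W1[of 1] by (auto simp: M1_def)
  have T2M1: "M1 < T2" using gr0 Dp sT by (simp add: T2_def)
  have rT3: "r0 + (T2 - M1) * sT / D = g" using Dp sT by (simp add: T2_def field_simps)
  have rF1: "\<tau>1 * sF / D = a" using Dp sF by (simp add: \<tau>1_def)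
  have rF2: "a + (\<tau>2 - \<tau>1) * sF / D = g" using Dp sF by (simp add: \<tau>2_def g_def)
  have rF0: "W0 * sF / D = r0" by (simp add: r0_def)
  have q1d: "1 - (\<tau>1 - M0) * sT / D = q1" by (simp add: q1_def)
  define rF where "rF = (\<lambda>t::real. if t \<le> \<tau>1 then t * sF / D else if t \<le> \<tau>2 then a + (t - \<tau>1) * sF / D else g)"
  define rT where "rT = (\<lambda>t::real. if t \<le> M0 then 1 else if t \<le> T1 then 1 - (t - M0) * sT / D
     else if t \<le> M1 then r0 else if t \<le> T2 then r0 + (t - M1) * sT / D else g)"
  define r where "r = (\<lambda>i::bool. if i then rT else rF)"
  define TT where "TT = (\<lambda>i (k::nat). if i then (if k = 0 then 0 else if k = 1 then T1 else T2)
      else (if k = 0 then 0 else if k = 1 then \<tau>1 else \<tau>2))"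
  define nn where "nn = (\<lambda>i::bool. (3::nat))"
  have rFg: "rF t = g" if "\<tau>2 \<le> t" for t
    using that t1t2 rF2 by (auto simp: rF_def)
  have rTg: "rT t = g" if "T2 \<le> t" for t
    using that T2M1 M1 t2T1 M0t1 t1t2 rT3 by (auto simp: rT_def)
  have ex: "execution galg \<alpha> s x0 F W C \<omega> (\<lambda>i t. x0 False + of_real (r i t) * u) TT nn"
  proof (rule exec_1d'[OF u[folded u_def] _ Fnz])
    show "x0 i = x0 False + of_real (r i 0) * u" for i
      using M0 M0t1 by (cases i) (auto simp: r_def rF_def rT_def u_def)
    show "TT i 0 = 0 \<and> 0 < nn i \<and> (\<forall>k<nn i. cycok r TT nn W C s (cmod u) (\<lambda>i k. coef \<alpha> (\<omega> i k)) i k)" for i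
    proof (cases i)
      case False
      have "\<forall>k<3. cycok r TT nn W C s D (\<lambda>i k. coef \<alpha> (\<omega> i k)) False k"
      proof (rule all_less3)
        show "cycok r TT nn W C s D (\<lambda>i k. coef \<alpha> (\<omega> i k)) False 0"
        proof (rule cycok_move[where rp=0 and tk=0 and tm=0 and rq=1 and c=a])
          show "r False (TT False 0) = 0" using M0t1 M0 by (simp add: r_def rF_def TT_def)
          show "TT False 0 + W False 0 = 0" "0 + C False 0 = 0" using W0[of 0] by (simp_all add: TT_def)
          show "r (\<not> False) 0 = 1" using M0 by (simp add: r_def rT_def)
          show "coef \<alpha> (\<omega> False 0) = a" by (rule c0)
          show "Suc 0 \<noteq> nn False" by (simp add: nn_def)
          show "(1::real) \<noteq> 0" by simp
          show "TT False (Suc 0) = 0 + \<bar>a\<bar> * \<bar>1 - 0\<bar> * D / s False"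
            using a0 by (simp add: TT_def \<tau>1_def sF_def)
          show "r False t = 0" if "TT False 0 \<le> t" "t \<le> 0" for t
            using that M0 M0t1 by (simp add: r_def rF_def TT_def)
          show "r False t = 0 + (t - 0) * s False / (\<bar>a\<bar> * \<bar>1 - 0\<bar> * D) * (a * (1 - 0))"
            if "0 \<le> t" "t \<le> TT False (Suc 0)" for t
            using that a0 Dp by (simp add: r_def rF_def TT_def sF_def)
        qed
        show "cycok r TT nn W C s D (\<lambda>i k. coef \<alpha> (\<omega> i k)) False 1"
        proof (rule cycok_move[where rp=a and tk="\<tau>1" and tm="\<tau>1" and rq=q1 and c=f])
          show "r False (TT False 1) = a" using rF1 by (simp add: r_def rF_def TT_def)
          show "TT False 1 + W False 1 = \<tau>1" "\<tau>1 + C False 1 = \<tau>1" using W0[of 1] by (simp_all add: TT_def)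
          show "r (\<not> False) \<tau>1 = q1" using M0t1 t1t2 t2T1 q1d by (simp add: r_def rT_def)
          show "coef \<alpha> (\<omega> False 1) = f" using c1 by (simp add: f_def sF_def sT_def)
          show "Suc 1 \<noteq> nn False" by (simp add: nn_def)
          show "q1 \<noteq> a" using q1a by simp
          show "TT False (Suc 1) = \<tau>1 + \<bar>f\<bar> * \<bar>q1 - a\<bar> * D / s False"
            using f01 q1a by (simp add: TT_def \<tau>2_def sF_def)
          show "r False t = a" if "TT False 1 \<le> t" "t \<le> \<tau>1" for t
            using that rF1 by (simp add: r_def rF_def TT_def)
          show "r False t = a + (t - \<tau>1) * s False / (\<bar>f\<bar> * \<bar>q1 - a\<bar> * D) * (f * (q1 - a))"
            if "\<tau>1 \<le> t" "t \<le> TT False (Suc 1)" for t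
          proof -
            have "a + (t - \<tau>1) * s False / (\<bar>f\<bar> * \<bar>q1 - a\<bar> * D) * (f * (q1 - a)) = a + (t - \<tau>1) * sF / D"
              using f01 q1a Dp by (simp add: sF_def)
            moreover have "rF t = a + (t - \<tau>1) * sF / D"
              using that rF1 by (auto simp: rF_def TT_def)
            ultimately show ?thesis by (simp add: r_def)
          qed
        qed
        show "cycok r TT nn W C s D (\<lambda>i k. coef \<alpha> (\<omega> i k)) False 2"
        proof (rule cycok_stop[where rp=g])
          show "r False (TT False 2) = g" using rFg by (simp add: r_def TT_def)
          show "r (\<not> False) (TT False 2 + W False 2) = g"
            using W0[of 2] M0t1 t1t2 t2T1 rT2 by (simp add: r_def rT_def TT_def)
          show "Suc 2 = nn False" by (simp add: nn_def)
          show "r False t = g" if "TT False 2 \<le> t" for t using that rFg by (simp add: r_def TT_def)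
        qed
      qed
      then show ?thesis using False by (simp add: TT_def nn_def D_def)
    next
      case True
      have "\<forall>k<3. cycok r TT nn W C s D (\<lambda>i k. coef \<alpha> (\<omega> i k)) True k"
      proof (rule all_less3)
        show "cycok r TT nn W C s D (\<lambda>i k. coef \<alpha> (\<omega> i k)) True 0"
        proof (rule cycok_move[where rp=1 and tk=W0 and tm=M0 and rq=r0 and c=1])
          show "r True (TT True 0) = 1" using M0 by (simp add: r_def rT_def TT_def)
          show "TT True 0 + W True 0 = W0" "W0 + C True 0 = M0" by (simp_all add: TT_def W0_def M0_def)
          show "r (\<not> True) W0 = r0" using M0 M0t1 rF0 by (simp add: r_def rF_def)
          show "coef \<alpha> (\<omega> True 0) = 1" by (rule c2)
          show "Suc 0 \<noteq> nn True" by (simp add: nn_def)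
          show "r0 \<noteq> 1" using r0x x1 by simp
          show "TT True (Suc 0) = M0 + \<bar>1\<bar> * \<bar>r0 - 1\<bar> * D / s True"
            using r0x x1 by (simp add: TT_def T1_def sT_def)
          show "r True t = 1" if "TT True 0 \<le> t" "t \<le> M0" for t
            using that by (simp add: r_def rT_def TT_def)
          show "r True t = 1 + (t - M0) * s True / (\<bar>1\<bar> * \<bar>r0 - 1\<bar> * D) * (1 * (r0 - 1))"
            if "M0 \<le> t" "t \<le> TT True (Suc 0)" for t
          proof -
            have "1 + (t - M0) * s True / (\<bar>1\<bar> * \<bar>r0 - 1\<bar> * D) * (1 * (r0 - 1)) = 1 - (t - M0) * sT / D"
              using r0x x1 Dp by (simp add: sT_def field_simps)
            moreover have "rT t = 1 - (t - M0) * sT / D"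
              using that by (auto simp: rT_def TT_def)
            ultimately show ?thesis by (simp add: r_def)
          qed
        qed
        show "cycok r TT nn W C s D (\<lambda>i k. coef \<alpha> (\<omega> i k)) True 1"
        proof (rule cycok_move[where rp=r0 and tk="T1 + W True 1" and tm=M1 and rq=g and c=1])
          have T1M0: "M0 < T1" using r0x x1 Dp sT by (simp add: T1_def)
          show "r True (TT True 1) = r0" using T1M0 rT1 by (simp add: r_def rT_def TT_def)
          show "TT True 1 + W True 1 = T1 + W True 1" "T1 + W True 1 + C True 1 = M1" by (simp_all add: TT_def M1_def)
          show "r (\<not> True) (T1 + W True 1) = g" using rFg M1 t2T1 by (simp add: r_def)
          show "coef \<alpha> (\<omega> True 1) = 1" by (rule c3)
          show "Suc 1 \<noteq> nn True" by (simp add: nn_def)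
          show "g \<noteq> r0" using gr0 by simp
          show "TT True (Suc 1) = M1 + \<bar>1\<bar> * \<bar>g - r0\<bar> * D / s True"
            using gr0 by (simp add: TT_def T2_def sT_def)
          show "r True t = r0" if "TT True 1 \<le> t" "t \<le> M1" for t
            using that T1M0 rT1 by (auto simp: r_def rT_def TT_def)
          show "r True t = r0 + (t - M1) * s True / (\<bar>1\<bar> * \<bar>g - r0\<bar> * D) * (1 * (g - r0))"
            if "M1 \<le> t" "t \<le> TT True (Suc 1)" for t
          proof -
            have "r0 + (t - M1) * s True / (\<bar>1\<bar> * \<bar>g - r0\<bar> * D) * (1 * (g - r0)) = r0 + (t - M1) * sT / D"
              using gr0 Dp by (simp add: sT_def)
            moreover have "rT t = r0 + (t - M1) * sT / D"
              using that T1M0 M1 rT1 by (auto simp: rT_def TT_def)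
            ultimately show ?thesis by (simp add: r_def)
          qed
        qed
        show "cycok r TT nn W C s D (\<lambda>i k. coef \<alpha> (\<omega> i k)) True 2"
        proof (rule cycok_stop[where rp=g])
          show "r True (TT True 2) = g" using rTg by (simp add: r_def TT_def)
          show "r (\<not> True) (TT True 2 + W True 2) = g"
            using W1[of 2] rFg T2M1 M1 t2T1 by (simp add: r_def TT_def)
          show "Suc 2 = nn True" by (simp add: nn_def)
          show "r True t = g" if "TT True 2 \<le> t" for t using that rTg by (simp add: r_def TT_def)
        qed
      qed
      then show ?thesis using True by (simp add: TT_def nn_def D_def)
    qed
  qed
  moreover have "gathered (\<lambda>i t. x0 False + of_real (r i t) * u)"
    unfolding gathered_def
    by (rule exI[of _ "T2"], rule exI[of _ "x0 False + of_real g * u"])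
       (use T2M1 M1 t2T1 in \<open>auto simp: r_def rFg rTg\<close>)
  ultimately show ?thesis unfolding gathers_def by blast
qed


lemma cyl_exists:
  assumes "finite S" "\<And>\<omega>. (\<And>x. x \<in> S \<Longrightarrow> \<omega> x = b x) \<Longrightarrow> P \<omega>"
  shows "\<exists>A\<in>sets coin_space. 0 < emeasure coin_space A \<and> (\<forall>\<omega>\<in>A. P \<omega>)"
  using cyl_pos[OF assms(1), of b] assms(2) by blast

lemma coef_1: "w 0 \<Longrightarrow> w 1 \<Longrightarrow> coef \<alpha> w = 1" by (simp add: coef_def)
lemma coef_0: "w 0 \<Longrightarrow> \<not> w 1 \<Longrightarrow> coef \<alpha> w = 0" by (simp add: coef_def)
lemma coef_f: "\<not> w 0 \<Longrightarrow> w 1 \<Longrightarrow> coef \<alpha> w = fc \<alpha> w" by (simp add: coef_def)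
lemma coef_a:
  assumes "\<not> w 0" "\<not> w 1" "\<forall>j<k. w (j + 3)" "\<not> w (k + 3)"
  shows "coef \<alpha> w = 1 - (1 - fc \<alpha> w / 2) ^ k"
proof -
  have "(LEAST j. \<not> w (j + 3)) = k"
    by (rule Least_equality) (use assms(3,4) in \<open>auto simp: not_less[symmetric]\<close>)
  then show ?thesis using assms(1,2) by (simp add: coef_def)
qed

lemma fc_eq:
  assumes "0 < s False" "0 < s True" "w 2 = (s True \<le> s False)"
  shows "fc (speed_ratio s) w = s False / (s False + s True)"
proof (cases "s True \<le> s False")
  case True
  then have "fc (speed_ratio s) w = (s False / s True) / (1 + s False / s True)"
    using assms by (simp add: fc_def speed_ratio_def max_def min_def)
  also have "\<dots> = s False / (s False + s True)" using assms by (simp add: field_simps)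
  finally show ?thesis .
next
  case False
  then have "fc (speed_ratio s) w = 1 / (1 + s True / s False)"
    using assms by (simp add: fc_def speed_ratio_def max_def min_def)
  also have "\<dots> = s False / (s False + s True)" using assms by (simp add: field_simps)
  finally show ?thesis .
qed

theorem theorem4:
  shows "\<exists>alg :: algorithm. \<forall>(s :: bool \<Rightarrow> real) (x0 :: bool \<Rightarrow> complex)
           (F :: bool \<Rightarrow> nat \<Rightarrow> frame) (W :: bool \<Rightarrow> nat \<Rightarrow> real) (C :: bool \<Rightarrow> nat \<Rightarrow> real).
     (\<forall>i. 0 < s i) \<and> (\<forall>i k. fst (F i k) \<noteq> 0) \<and>
     (\<forall>k. W False k = 0 \<and> C False k = 0) \<and>
     (\<forall>k. 0 \<le> W True k \<and> 0 \<le> C True k) \<longrightarrow>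
     (\<exists>A\<in>sets coin_space. 0 < emeasure coin_space A \<and>
        (\<forall>\<omega>\<in>A. gathers alg (speed_ratio s) s x0 F W C (\<lambda>i k j. \<omega> (i, k, j))))"
proof (rule exI[of _ galg], intro allI impI)
  fix s :: "bool \<Rightarrow> real" and x0 :: "bool \<Rightarrow> complex" and F :: "bool \<Rightarrow> nat \<Rightarrow> frame"
    and W C :: "bool \<Rightarrow> nat \<Rightarrow> real"
  assume H: "(\<forall>i. 0 < s i) \<and> (\<forall>i k. fst (F i k) \<noteq> 0) \<and>
     (\<forall>k. W False k = 0 \<and> C False k = 0) \<and> (\<forall>k. 0 \<le> W True k \<and> 0 \<le> C True k)"
  have sp: "\<And>i. 0 < s i" and Fnz: "\<And>i k. fst (F i k) \<noteq> 0"
    and W0: "\<And>k. W False k = 0 \<and> C False k = 0" and W1: "\<And>k. 0 \<le> W True k \<and> 0 \<le> C True k"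
    using H by auto
  have sF: "0 < s False" and sT: "0 < s True" using sp by auto
  define D where "D = cmod (x0 True - x0 False)"
  define M0 where "M0 = W True 0 + C True 0"
  show "\<exists>A\<in>sets coin_space. 0 < emeasure coin_space A \<and>
        (\<forall>\<omega>\<in>A. gathers galg (speed_ratio s) s x0 F W C (\<lambda>i k j. \<omega> (i, k, j)))"
  proof (cases "x0 True - x0 False = 0")
    case True
    show ?thesis
      by (rule cyl_exists[of "{}"]) (use True in \<open>auto intro: case0\<close>)
  next
    case u: False
    show ?thesis
    proof (cases "D / s False \<le> M0")
      case True
      define S :: "(bool \<times> nat \<times> nat) set" where "S = {(False,0,0),(False,0,1),(True,0,0),(True,0,1)}"
      show ?thesis
      proof (rule cyl_exists[of S "\<lambda>x. x \<noteq> (True,0,1)"])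
        show "finite S" by (simp add: S_def)
        fix \<omega> :: "bool \<times> nat \<times> nat \<Rightarrow> bool"
        assume b: "\<And>x. x \<in> S \<Longrightarrow> \<omega> x = (x \<noteq> (True,0,1))"
        have c0: "coef (speed_ratio s) (\<lambda>j. \<omega> (False, 0, j)) = 1"
          by (rule coef_1) (use b in \<open>auto simp: S_def\<close>)
        have c1: "coef (speed_ratio s) (\<lambda>j. \<omega> (True, 0, j)) = 0"
          by (rule coef_0) (use b in \<open>auto simp: S_def\<close>)
        show "gathers galg (speed_ratio s) s x0 F W C (\<lambda>i k j. \<omega> (i, k, j))"
          by (rule caseX[OF u sp Fnz W0 W1]) (use True c0 c1 in \<open>simp_all add: D_def M0_def\<close>)
      qed
    next
      case False
      define f where "f = s False / (s False + s True)"
      define x where "x = s False * M0 / D"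
      define \<rho> where "\<rho> = 1 - f / 2"
      have Dp: "0 < D" using u by (simp add: D_def)
      have f01: "0 < f" "f < 1" using sF sT by (auto simp: f_def field_simps)
      have x0: "0 \<le> x" using W1[of 0] sF Dp by (simp add: x_def M0_def)
      have x1: "x < 1" using False sF Dp by (simp add: x_def field_simps)
      have \<rho>: "0 < \<rho>" "\<rho> < 1" "1 - f < \<rho>" using f01 by (auto simp: \<rho>_def)
      have exn: "\<exists>n. \<rho> ^ n < 1 - x" using real_arch_pow_inv[of "1 - x" \<rho>] x1 \<rho> by simp
      define k0 where "k0 = (LEAST n. \<rho> ^ n < 1 - x)"
      have k0a: "\<rho> ^ k0 < 1 - x" unfolding k0_def by (rule LeastI_ex[OF exn])
      have k0pos: "k0 \<noteq> 0"
      proof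
        assume "k0 = 0"
        then show False using k0a x0 by simp
      qed
      then obtain m where m: "k0 = Suc m" by (cases k0) auto
      have "\<not> \<rho> ^ m < 1 - x" using m unfolding k0_def by (metis lessI not_less_Least)
      then have "(1 - x) \<le> \<rho> ^ m" by simp
      then have "\<rho> * (1 - x) \<le> \<rho> ^ k0" using \<rho> m by (simp add: mult_left_mono)
      moreover have "(1 - f) * (1 - x) < \<rho> * (1 - x)" using \<rho> x1 by (intro mult_strict_right_mono) auto
      ultimately have k0b: "(1 - f) * (1 - x) < \<rho> ^ k0" by linarith
      define a where "a = 1 - \<rho> ^ k0"
      have xa: "x < a" using k0a by (simp add: a_def)
      have ax: "a < f + (1 - f) * x" using k0b by (simp add: a_def algebra_simps)
      define \<beta> where "\<beta> = (s True \<le> s False)"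
      define S :: "(bool \<times> nat \<times> nat) set" where "S = (\<lambda>j. (False, 0::nat, j)) ` {..k0+3} \<union> (\<lambda>j. (False, 1::nat, j)) ` {..2::nat} \<union> ({True} \<times> {..1::nat} \<times> {..1::nat})"
      define b :: "bool \<times> nat \<times> nat \<Rightarrow> bool" where "b = (\<lambda>(i, k, j). if i then True else if k = 0 then (if j \<le> 1 then False else if j = 2 then \<beta> else j < k0 + 3)
         else (if j = 0 then False else if j = 1 then True else \<beta>))"
      show ?thesis
      proof (rule cyl_exists[of S b])
        show "finite S" by (simp add: S_def)
        fix \<omega> :: "bool \<times> nat \<times> nat \<Rightarrow> bool"
        assume bb: "\<And>x. x \<in> S \<Longrightarrow> \<omega> x = b x"
        have F0: "\<omega> (False, 0, j) = b (False, 0, j)" if "j \<le> k0 + 3" for j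
          using bb that by (simp add: S_def)
        have F1: "\<omega> (False, 1, j) = b (False, 1, j)" if "j \<le> 2" for j
          using bb that by (simp add: S_def)
        have T0: "\<omega> (True, k, j) = True" if "k \<le> 1" "j \<le> 1" for k j
          using bb that by (simp add: S_def b_def)
        have fcF0: "fc (speed_ratio s) (\<lambda>j. \<omega> (False, 0, j)) = f"
          unfolding f_def by (rule fc_eq[OF sF sT]) (use F0[of 2] in \<open>simp add: b_def \<beta>_def\<close>)
        have fcF1: "fc (speed_ratio s) (\<lambda>j. \<omega> (False, 1, j)) = f"
          unfolding f_def by (rule fc_eq[OF sF sT]) (use F1[of 2] in \<open>simp add: b_def \<beta>_def\<close>)
        have c0: "coef (speed_ratio s) (\<lambda>j. \<omega> (False, 0, j)) = a"
        proof -
          have "coef (speed_ratio s) (\<lambda>j. \<omega> (False, 0, j)) = 1 - (1 - fc (speed_ratio s) (\<lambda>j. \<omega> (False, 0, j)) / 2) ^ k0"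
          proof (rule coef_a)
            show "\<not> \<omega> (False, 0, 0)" using F0[of 0] by (simp add: b_def)
            show "\<not> \<omega> (False, 0, 1)" using F0[of 1] by (simp add: b_def)
            show "\<forall>j<k0. \<omega> (False, 0, j + 3)" using F0 by (simp add: b_def)
            show "\<not> \<omega> (False, 0, k0 + 3)" using F0[of "k0 + 3"] by (simp add: b_def)
          qed
          then show ?thesis using fcF0 by (simp add: a_def \<rho>_def)
        qed
        have c1: "coef (speed_ratio s) (\<lambda>j. \<omega> (False, 1, j)) = f"
        proof -
          have "coef (speed_ratio s) (\<lambda>j. \<omega> (False, 1, j)) = fc (speed_ratio s) (\<lambda>j. \<omega> (False, 1, j))"
            by (rule coef_f) (use F1[of 0] F1[of 1] in \<open>simp_all add: b_def\<close>)
          then show ?thesis using fcF1 by simp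
        qed
        have c2: "coef (speed_ratio s) (\<lambda>j. \<omega> (True, 0, j)) = 1"
          by (rule coef_1) (use T0 in simp_all)
        have c3: "coef (speed_ratio s) (\<lambda>j. \<omega> (True, 1, j)) = 1"
          by (rule coef_1) (use T0 in simp_all)
        show "gathers galg (speed_ratio s) s x0 F W C (\<lambda>i k j. \<omega> (i, k, j))"
        proof (rule caseY[OF u sp Fnz W0 W1, where a=a])
          show "s False * (W True 0 + C True 0) / cmod (x0 True - x0 False) < a"
            using xa by (simp add: x_def M0_def D_def)
          show "a < s False / (s False + s True) + (1 - s False / (s False + s True)) * (s False * (W True 0 + C True 0) / cmod (x0 True - x0 False))"
            using ax by (simp add: x_def M0_def D_def f_def)
        qed (use c0 c1 c2 c3 in \<open>simp_all add: f_def\<close>)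
      qed
    qed
  qed
qed


end
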